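(* Let $\epsilon:\mathbb{N}\to[0,\infty)$ be a non-decreasing function and let $\mathcal{A}$ be a deterministic online linear optimization algorithm on $\mathbb{R}^d$, outputting $x_t\in\mathbb{R}^d$ as a function of $g_1,\dots,g_{t-1}$, such that for every $t$ and every sequence $g_1,\dots,g_t\in\mathbb{R}^d$ with $\|g_i\|_2\le1$ we have $\sum_{i=1}^t\langle g_i,x_i\rangle\le\epsilon(t)$ (i.e. its regret against the competitor $0$ is at most $\epsilon(t)$). Then for every $T$, every sequence $g_1,\dots,g_T$ with $\|g_i\|_2\le1$ and every $t=1,\dots,T$, \[ \|x_t\|_2\le\epsilon(T)-\sum_{i=1}^{t-1}\langle g_i,x_i\rangle, \] and consequently there exists $\beta_t\in\mathbb{R}^d$ with $\|\beta_t\|_2\le1$ such that $x_t=\beta_t\left(\epsilon(T)-\sum_{i=1}^{t-1}\langle g_i,x_i\rangle\right)$. *)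

theory Defs
  imports "HOL-Analysis.Analysis"
begin

text \<open>Gradient sequences are indexed from 1.\<close>

definition olo_pred :: "('a list \<Rightarrow> 'a) \<Rightarrow> (nat \<Rightarrow> 'a) \<Rightarrow> nat \<Rightarrow> 'a" where
  "olo_pred A g t = A (map g [1..<t])"

end

theory Submission
  imports Defs
begin

theorem mainTheorem10:
  fixes \<epsilon> :: "nat \<Rightarrow> real"
    and A :: "'a::euclidean_space list \<Rightarrow> 'a"
    and g :: "nat \<Rightarrow> 'a"
    and T t :: nat
  assumes eps_nonneg: "\<And>n. \<epsilon> n \<ge> 0"
    and eps_mono: "mono \<epsilon>"
    and regret: "\<And>s h. (\<forall>i\<in>{1..s}. norm (h i) \<le> 1) \<Longrightarrow>
                  (\<Sum>i=1..s. inner (h i) (olo_pred A h i)) \<le> \<epsilon> s"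
    and g_bdd: "\<forall>i\<in>{1..T}. norm (g i) \<le> 1"
    and t_range: "t \<in> {1..T}"
  shows "norm (olo_pred A g t) \<le> \<epsilon> T - (\<Sum>i=1..<t. inner (g i) (olo_pred A g i))
       \<and> (\<exists>\<beta>::'a. norm \<beta> \<le> 1 \<and>
            olo_pred A g t = (\<epsilon> T - (\<Sum>i=1..<t. inner (g i) (olo_pred A g i))) *\<^sub>R \<beta>)"
proof -
  define x where "x = olo_pred A g t"
  define S where "S = (\<Sum>i=1..<t. inner (g i) (olo_pred A g i))"
  define h where "h = (\<lambda>i. if i < t then g i else sgn x)"
  have t1: "1 \<le> t" "t \<le> T" using t_range by auto
  have hb: "\<forall>i\<in>{1..t}. norm (h i) \<le> 1"
    using g_bdd t1 by (auto simp: h_def norm_sgn)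
  have agree: "olo_pred A h i = olo_pred A g i" if "i \<le> t" for i
    unfolding olo_pred_def using that by (intro arg_cong[where f=A] map_cong) (auto simp: h_def)
  have "(\<Sum>i=1..t. inner (h i) (olo_pred A h i)) \<le> \<epsilon> t" using regret hb by blast
  also have "\<dots> \<le> \<epsilon> T" using eps_mono t1 by (simp add: mono_def)
  finally have r: "(\<Sum>i=1..t. inner (h i) (olo_pred A h i)) \<le> \<epsilon> T" .
  have split: "{1..t} = insert t {1..<t}" using t1 by auto
  have "(\<Sum>i=1..t. inner (h i) (olo_pred A h i)) = inner (h t) (olo_pred A h t) + (\<Sum>i=1..<t. inner (h i) (olo_pred A h i))"
    unfolding split by simp
  also have "(\<Sum>i=1..<t. inner (h i) (olo_pred A h i)) = S"
    unfolding S_def using agree by (intro sum.cong) (auto simp: h_def)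
  also have "inner (h t) (olo_pred A h t) = norm x"
    using agree[of t] by (simp add: h_def x_def[symmetric] sgn_div_norm inner_commute dot_square_norm power2_eq_square divide_simps)
  finally have "norm x + S \<le> \<epsilon> T" using r by simp
  then have n: "norm x \<le> \<epsilon> T - S" by linarith
  have ex: "\<exists>\<beta>::'a. norm \<beta> \<le> 1 \<and> x = (\<epsilon> T - S) *\<^sub>R \<beta>"
  proof (cases "\<epsilon> T - S = 0")
    case True
    then show ?thesis using n by (intro exI[of _ 0]) auto
  next
    case False
    with n have c: "\<epsilon> T - S > 0" using norm_ge_zero[of x] by linarith
    show ?thesis
      using c n by (intro exI[of _ "x /\<^sub>R (\<epsilon> T - S)"]) (auto simp: divide_simps)
  qed
  show ?thesis using n ex unfolding x_def S_def by blast
qed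

end
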